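(* Let $\Gamma=\mathbb{A}^1\setminus\{0,1\}$. For every closed embedding $\tau\colon\Gamma\to\mathbb{A}^2$, there exists an automorphism $g\in\mathrm{Aut}(\Gamma)$ such that there is no $h\in\mathrm{Aut}(\mathbb{A}^2)$ with $h\circ\tau=\tau\circ g$.
   Context: All varieties are over $\mathbb{C}$; $\mathrm{Aut}$ denotes the group of algebraic automorphisms. *)

theory Defs
  imports Complex_Main "HOL-Computational_Algebra.Polynomial"
begin

definition Gamma :: "complex set" where
  "Gamma = UNIV - {0, 1}"

text \<open>Regular functions on Gamma: elements of C[t, 1/t, 1/(t-1)], i.e.
  functions of the form p(t) / (t^a (t-1)^b) with p a polynomial.\<close>
definition regular_Gamma :: "(complex \<Rightarrow> complex) \<Rightarrow> bool" where
  "regular_Gamma f \<longleftrightarrow> (\<exists>(p::complex poly) (a::nat) (b::nat).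
      \<forall>t\<in>Gamma. f t = poly p t / (t ^ a * (t - 1) ^ b))"

definition poly2 :: "(complex \<times> complex \<Rightarrow> complex) \<Rightarrow> bool" where
  "poly2 f \<longleftrightarrow> (\<exists>(c::nat \<Rightarrow> nat \<Rightarrow> complex) (N::nat).
      \<forall>x y. f (x, y) = (\<Sum>i\<le>N. \<Sum>j\<le>N. c i j * x ^ i * y ^ j))"

definition morphism_Gamma_A2 :: "(complex \<Rightarrow> complex \<times> complex) \<Rightarrow> bool" where
  "morphism_Gamma_A2 \<tau> \<longleftrightarrow> regular_Gamma (\<lambda>t. fst (\<tau> t)) \<and> regular_Gamma (\<lambda>t. snd (\<tau> t))"

text \<open>Closed embedding of affine varieties: the comorphism C[X,Y] -> O(Gamma) is surjective,
  i.e. the generators t, 1/t, 1/(t-1) of O(Gamma) are pullbacks of polynomials.\<close>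
definition closed_embedding_Gamma_A2 :: "(complex \<Rightarrow> complex \<times> complex) \<Rightarrow> bool" where
  "closed_embedding_Gamma_A2 \<tau> \<longleftrightarrow> morphism_Gamma_A2 \<tau> \<and>
     (\<exists>P Q R. poly2 P \<and> poly2 Q \<and> poly2 R \<and>
        (\<forall>t\<in>Gamma. P (\<tau> t) = t \<and> Q (\<tau> t) = 1 / t \<and> R (\<tau> t) = 1 / (t - 1)))"

definition morphism_Gamma :: "(complex \<Rightarrow> complex) \<Rightarrow> bool" where
  "morphism_Gamma g \<longleftrightarrow> g ` Gamma \<subseteq> Gamma \<and> regular_Gamma g"

definition Aut_Gamma :: "(complex \<Rightarrow> complex) set" where
  "Aut_Gamma = {g. morphism_Gamma g \<and>
     (\<exists>g'. morphism_Gamma g' \<and> (\<forall>t\<in>Gamma. g' (g t) = t \<and> g (g' t) = t))}"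

definition poly_map_A2 :: "(complex \<times> complex \<Rightarrow> complex \<times> complex) \<Rightarrow> bool" where
  "poly_map_A2 h \<longleftrightarrow> poly2 (\<lambda>z. fst (h z)) \<and> poly2 (\<lambda>z. snd (h z))"

definition Aut_A2 :: "(complex \<times> complex \<Rightarrow> complex \<times> complex) set" where
  "Aut_A2 = {h. poly_map_A2 h \<and>
     (\<exists>h'. poly_map_A2 h' \<and> (\<forall>z. h' (h z) = z \<and> h (h' z) = z))}"

end

theory Submission
  imports Defs "HOL-Computational_Algebra.Polynomial_Factorial" "HOL-Computational_Algebra.Fundamental_Theorem_Algebra" "HOL-Computational_Algebra.Field_as_Ring"
begin

definition ev2 :: "complex poly poly \<Rightarrow> complex \<Rightarrow> complex \<Rightarrow> complex" where
  "ev2 F x y = poly (poly F [:y:]) x"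

lemma ev2_pCons[simp]: "ev2 (pCons c F) x y = poly c x + y * ev2 F x y"
  by (simp add: ev2_def)
lemma ev2_0[simp]: "ev2 0 x y = 0" by (simp add: ev2_def)
lemma ev2_1[simp]: "ev2 1 x y = 1" by (simp add: ev2_def)
lemma ev2_add[simp]: "ev2 (A + B) x y = ev2 A x y + ev2 B x y" by (simp add: ev2_def)
lemma ev2_diff[simp]: "ev2 (A - B) x y = ev2 A x y - ev2 B x y" by (simp add: ev2_def)
lemma ev2_minus[simp]: "ev2 (- A) x y = - ev2 A x y" by (simp add: ev2_def)
lemma ev2_mult[simp]: "ev2 (A * B) x y = ev2 A x y * ev2 B x y" by (simp add: ev2_def)
lemma ev2_power[simp]: "ev2 (A ^ n) x y = ev2 A x y ^ n" by (induct n) auto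
lemma ev2_const[simp]: "ev2 [:[:c:]:] x y = c" by (simp add: ev2_def)
lemma ev2_X[simp]: "ev2 [:[:0,1:]:] x y = x" by (simp add: ev2_def)
lemma ev2_Y[simp]: "ev2 [:0,1:] x y = y" by (simp add: ev2_def)
lemma ev2_sum: "ev2 (\<Sum>i\<in>S. f i) x y = (\<Sum>i\<in>S. ev2 (f i) x y)"
  by (induct S rule: infinite_finite_induct) auto

lemma ev2_alt: "ev2 F x y = poly (map_poly (\<lambda>c. poly c x) F) y"
  by (induct F) (auto simp: map_poly_pCons)

lemma ev2_zero_imp: assumes "\<And>x y. ev2 F x y = 0" shows "F = 0"
proof -
  have "\<And>x. map_poly (\<lambda>c. poly c x) F = 0"
    using assms by (simp add: ev2_alt poly_all_0_iff_0[symmetric])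
  hence "\<And>x j. poly (coeff F j) x = 0"
    by (metis coeff_0 coeff_map_poly poly_0)
  hence "\<And>j. coeff F j = 0" by (meson poly_all_0_iff_0)
  thus ?thesis by (simp add: poly_eq_iff)
qed

lemma ev2_eqI: assumes "\<And>x y. ev2 F x y = ev2 G x y" shows "F = G"
  using ev2_zero_imp[of "F - G"] assms by auto

definition P2 :: "(complex \<Rightarrow> complex \<Rightarrow> complex) \<Rightarrow> bool" where
  "P2 f \<longleftrightarrow> (\<exists>F. \<forall>x y. f x y = ev2 F x y)"

lemma P2_ev2[simp]: "P2 (ev2 F)" unfolding P2_def by blast
lemma P2_const: "P2 (\<lambda>x y. c)" unfolding P2_def by (rule exI[of _ "[:[:c:]:]"]) simp
lemma P2_x: "P2 (\<lambda>x y. x)" unfolding P2_def by (rule exI[of _ "[:[:0,1:]:]"]) simp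
lemma P2_y: "P2 (\<lambda>x y. y)" unfolding P2_def by (rule exI[of _ "[:0,1:]"]) simp
lemma P2_add: "P2 f \<Longrightarrow> P2 g \<Longrightarrow> P2 (\<lambda>x y. f x y + g x y)"
  unfolding P2_def by (metis ev2_add)
lemma P2_mult: "P2 f \<Longrightarrow> P2 g \<Longrightarrow> P2 (\<lambda>x y. f x y * g x y)"
  unfolding P2_def by (metis ev2_mult)
lemma P2_diff: "P2 f \<Longrightarrow> P2 g \<Longrightarrow> P2 (\<lambda>x y. f x y - g x y)"
  unfolding P2_def by (metis ev2_diff)

lemma P2_poly_comp: "P2 a \<Longrightarrow> P2 (\<lambda>x y. poly c (a x y))"
proof (induct c)
  case 0 then show ?case using P2_const[of 0] by simp
next
  case (pCons d c)
  then show ?case using P2_add[OF P2_const P2_mult[OF pCons(3) pCons(2)[OF pCons(3)]]] by simp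
qed

lemma P2_comp: assumes "P2 a" "P2 b" shows "P2 (\<lambda>x y. ev2 F (a x y) (b x y))"
proof (induct F)
  case 0 then show ?case using P2_const[of 0] by simp
next
  case (pCons c F)
  then show ?case using P2_add[OF P2_poly_comp[OF assms(1)] P2_mult[OF assms(2) pCons(2)]] by simp
qed

lemma P2_ex: "P2 f \<Longrightarrow> \<exists>F. \<forall>x y. f x y = ev2 F x y" unfolding P2_def by blast

definition dX :: "complex poly poly \<Rightarrow> complex poly poly" where "dX F = map_poly pderiv F"
definition dY :: "complex poly poly \<Rightarrow> complex poly poly" where "dY F = pderiv F"

lemma dX_pCons[simp]: "dX (pCons c F) = pCons (pderiv c) (dX F)"
  by (simp add: dX_def map_poly_pCons)
lemma dY_pCons[simp]: "dY (pCons c F) = F + pCons 0 (dY F)"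
  by (simp add: dY_def pderiv_pCons)

lemma ev2_chain:
  assumes "(a has_field_derivative a') (at t within S)" "(b has_field_derivative b') (at t within S)"
  shows "((\<lambda>t. ev2 F (a t) (b t)) has_field_derivative
           (ev2 (dX F) (a t) (b t) * a' + ev2 (dY F) (a t) (b t) * b')) (at t within S)"
proof (induct F)
  case 0 then show ?case by (simp add: dX_def dY_def)
next
  case (pCons c F)
  have d1: "((\<lambda>t. poly c (a t)) has_field_derivative poly (pderiv c) (a t) * a') (at t within S)"
    using DERIV_chain2[OF poly_DERIV assms(1)] by simp
  have "((\<lambda>t. poly c (a t) + b t * ev2 F (a t) (b t)) has_field_derivative
      poly (pderiv c) (a t) * a' + (b t * (ev2 (dX F) (a t) (b t) * a' + ev2 (dY F) (a t) (b t) * b') + b' * ev2 F (a t) (b t))) (at t within S)"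
    by (intro DERIV_add d1 DERIV_mult' assms(2) pCons(2))
  then show ?case by (simp add: algebra_simps)
qed

lemma ev2_nonzero_const:
  assumes "\<And>x y. ev2 F x y \<noteq> 0" shows "\<exists>c. \<forall>x y. ev2 F x y = c"
proof -
  have A: "\<And>x j. j \<ge> 1 \<Longrightarrow> poly (coeff F j) x = 0"
  proof -
    fix x :: complex and j :: nat assume j: "j \<ge> 1"
    let ?q = "map_poly (\<lambda>c. poly c x) F"
    have "\<forall>y. poly ?q y \<noteq> 0" using assms by (simp add: ev2_alt)
    hence "constant (poly ?q)" using fundamental_theorem_of_algebra by blast
    hence "degree ?q = 0" by (simp add: constant_degree)
    hence "coeff ?q j = 0" using j by (simp add: coeff_eq_0)
    thus "poly (coeff F j) x = 0" by (simp add: coeff_map_poly)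
  qed
  hence B: "\<And>j. j \<ge> 1 \<Longrightarrow> coeff F j = 0" by (meson poly_all_0_iff_0)
  have C: "F = [:coeff F 0:]"
    by (rule poly_eqI) (metis B coeff_pCons_0 coeff_pCons_Suc coeff_0 le_add1 not0_implies_Suc plus_1_eq_Suc)
  have "\<forall>x. poly (coeff F 0) x \<noteq> 0"
  proof
    fix x have "ev2 [:coeff F 0:] x 0 \<noteq> 0" using assms[of x 0] C by simp
    thus "poly (coeff F 0) x \<noteq> 0" by simp
  qed
  hence "constant (poly (coeff F 0))" using fundamental_theorem_of_algebra by blast
  then obtain c where "\<And>x. poly (coeff F 0) x = c" unfolding constant_def by blast
  hence "\<forall>x y. ev2 F x y = c" by (subst C) (simp add: ev2_def)
  thus ?thesis by blast
qed

lemma Gamma_iff: "t \<in> Gamma \<longleftrightarrow> t \<noteq> 0 \<and> t \<noteq> 1" by (auto simp: Gamma_def)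
lemma open_Gamma: "open Gamma" unfolding Gamma_def by (intro open_Diff finite_imp_closed) auto
lemma infinite_Gamma: "infinite Gamma"
  unfolding Gamma_def using infinite_UNIV_char_0[where 'a=complex] by (metis finite.emptyI finite_Diff2 finite_insert)

lemma poly_lin1[simp]: "poly [:-1,1:] t = t - (1::complex)" by simp

abbreviation "R f \<equiv> regular_Gamma f"

lemma regI: "(\<And>t. t \<in> Gamma \<Longrightarrow> f t = poly p t / (t ^ a * (t - 1) ^ b)) \<Longrightarrow> R f"
  unfolding regular_Gamma_def by blast

lemma reg_cong: "R f \<Longrightarrow> (\<And>t. t \<in> Gamma \<Longrightarrow> f t = g t) \<Longrightarrow> R g"
  unfolding regular_Gamma_def by metis

lemma reg_poly: "R (\<lambda>t. poly p t)" by (rule regI[of _ p 0 0]) simp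
lemma reg_const: "R (\<lambda>t. c)" using reg_poly[of "[:c:]"] by simp
lemma reg_id: "R (\<lambda>t. t)" using reg_poly[of "[:0,1:]"] by simp
lemma reg_inv: "R (\<lambda>t. 1 / t)" by (rule regI[of _ 1 1 0]) simp
lemma reg_inv1: "R (\<lambda>t. 1 / (t - 1))" by (rule regI[of _ 1 0 1]) simp

lemma reg_add: assumes "R f" "R g" shows "R (\<lambda>t. f t + g t)"
proof -
  obtain p a b where f: "\<forall>t\<in>Gamma. f t = poly p t / (t ^ a * (t - 1) ^ b)" using assms(1) unfolding regular_Gamma_def by blast
  obtain q c d where g: "\<forall>t\<in>Gamma. g t = poly q t / (t ^ c * (t - 1) ^ d)" using assms(2) unfolding regular_Gamma_def by blast
  show ?thesis
  proof (rule regI[of _ "p * [:0,1:]^c * [:-1,1:]^d + q * [:0,1:]^a * [:-1,1:]^b" "a+c" "b+d"])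
    fix t assume t: "t \<in> Gamma"
    hence nz: "t ^ a * (t - 1) ^ b \<noteq> 0" "t ^ c * (t - 1) ^ d \<noteq> 0" by (auto simp: Gamma_iff)
    have e1: "poly (p * [:0,1:]^c * [:-1,1:]^d + q * [:0,1:]^a * [:-1,1:]^b) t
        = poly p t * (t ^ c * (t - 1) ^ d) + poly q t * (t ^ a * (t - 1) ^ b)"
      by (simp add: poly_power mult.assoc)
    have e2: "t ^ (a+c) * (t - 1) ^ (b+d) = (t ^ a * (t - 1) ^ b) * (t ^ c * (t - 1) ^ d)"
      by (simp add: power_add mult_ac)
    have "f t + g t = poly p t / (t ^ a * (t - 1) ^ b) + poly q t / (t ^ c * (t - 1) ^ d)"
      using f g t by simp
    also have "\<dots> = (poly p t * (t ^ c * (t - 1) ^ d) + poly q t * (t ^ a * (t - 1) ^ b)) / ((t ^ a * (t - 1) ^ b) * (t ^ c * (t - 1) ^ d))"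
      by (rule add_frac_eq[OF nz])
    finally show "f t + g t = poly (p * [:0,1:]^c * [:-1,1:]^d + q * [:0,1:]^a * [:-1,1:]^b) t / (t ^ (a+c) * (t - 1) ^ (b+d))"
      unfolding e1 e2 .
  qed
qed

lemma reg_mult: assumes "R f" "R g" shows "R (\<lambda>t. f t * g t)"
proof -
  obtain p a b where f: "\<forall>t\<in>Gamma. f t = poly p t / (t ^ a * (t - 1) ^ b)" using assms(1) unfolding regular_Gamma_def by blast
  obtain q c d where g: "\<forall>t\<in>Gamma. g t = poly q t / (t ^ c * (t - 1) ^ d)" using assms(2) unfolding regular_Gamma_def by blast
  show ?thesis
  proof (rule regI[of _ "p * q" "a+c" "b+d"])
    fix t assume t: "t \<in> Gamma"
    hence "t \<noteq> 0" "t - 1 \<noteq> 0" by (auto simp: Gamma_iff)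
    thus "f t * g t = poly (p * q) t / (t ^ (a+c) * (t - 1) ^ (b+d))"
      using f g t by (simp add: field_simps power_add)
  qed
qed

lemma reg_minus: "R f \<Longrightarrow> R (\<lambda>t. - f t)"
  using reg_mult[OF reg_const[of "-1"]] by simp
lemma reg_diff: "R f \<Longrightarrow> R g \<Longrightarrow> R (\<lambda>t. f t - g t)"
  using reg_add[OF _ reg_minus] by simp
lemma reg_power: "R f \<Longrightarrow> R (\<lambda>t. f t ^ n)"
  by (induct n) (auto intro: reg_mult reg_const)

lemma reg_poly_comp: "R a \<Longrightarrow> R (\<lambda>t. poly c (a t))"
  by (induct c) (auto intro: reg_add reg_mult reg_const)

lemma reg_ev2: assumes "R a" "R b" shows "R (\<lambda>t. ev2 F (a t) (b t))"
proof (induct F)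
  case 0 then show ?case using reg_const[of 0] by simp
next
  case (pCons c F) then show ?case by (simp add: reg_add reg_mult reg_poly_comp assms)
qed

lemma reg_prod_zero:
  assumes "R f" "R g" "\<And>t. t \<in> Gamma \<Longrightarrow> f t * g t = 0"
  shows "(\<forall>t\<in>Gamma. f t = 0) \<or> (\<forall>t\<in>Gamma. g t = 0)"
proof -
  obtain p a b where f: "\<forall>t\<in>Gamma. f t = poly p t / (t ^ a * (t - 1) ^ b)" using assms(1) unfolding regular_Gamma_def by blast
  obtain q c d where g: "\<forall>t\<in>Gamma. g t = poly q t / (t ^ c * (t - 1) ^ d)" using assms(2) unfolding regular_Gamma_def by blast
  have "Gamma \<subseteq> {t. poly (p * q) t = 0}"
  proof
    fix t assume t: "t \<in> Gamma"
    hence "t \<noteq> 0" "t - 1 \<noteq> 0" by (auto simp: Gamma_iff)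
    thus "t \<in> {t. poly (p * q) t = 0}" using assms(3)[OF t] f g t by auto
  qed
  hence "p * q = 0" using infinite_Gamma poly_roots_finite by (metis infinite_super)
  hence "p = 0 \<or> q = 0" by simp
  thus ?thesis using f g by auto
qed

definition RD :: "(complex \<Rightarrow> complex) \<Rightarrow> (complex \<Rightarrow> complex) \<Rightarrow> bool" where
  "RD f f' \<longleftrightarrow> R f \<and> R f' \<and> (\<forall>t\<in>Gamma. (f has_field_derivative f' t) (at t))"

lemma RD_poly: "RD (\<lambda>t. poly p t) (\<lambda>t. poly (pderiv p) t)"
  unfolding RD_def by (auto intro: reg_poly)

lemma RD_add: "RD f f' \<Longrightarrow> RD g g' \<Longrightarrow> RD (\<lambda>t. f t + g t) (\<lambda>t. f' t + g' t)"
  unfolding RD_def by (auto intro: reg_add DERIV_add)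

lemma RD_mult: "RD f f' \<Longrightarrow> RD g g' \<Longrightarrow> RD (\<lambda>t. f t * g t) (\<lambda>t. f t * g' t + f' t * g t)"
  unfolding RD_def by (auto intro!: reg_add reg_mult DERIV_mult')

lemma RD_inv: "RD (\<lambda>t. 1 / t) (\<lambda>t. - (1 / t) * (1 / t))"
  unfolding RD_def
proof (intro conjI reg_inv reg_minus reg_mult ballI)
  fix t :: complex assume "t \<in> Gamma"
  hence "t \<noteq> 0" by (auto simp: Gamma_iff)
  thus "((\<lambda>t. 1 / t) has_field_derivative - (1 / t) * (1 / t)) (at t)"
    by (auto intro!: derivative_eq_intros simp: power2_eq_square field_simps)
qed

lemma RD_inv1: "RD (\<lambda>t. 1 / (t - 1)) (\<lambda>t. - (1 / (t - 1)) * (1 / (t - 1)))"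
  unfolding RD_def
proof (intro conjI reg_inv1 reg_minus reg_mult ballI)
  fix t :: complex assume "t \<in> Gamma"
  hence "t - 1 \<noteq> 0" by (auto simp: Gamma_iff)
  thus "((\<lambda>t. 1 / (t - 1)) has_field_derivative - (1 / (t - 1)) * (1 / (t - 1))) (at t)"
    by (auto intro!: derivative_eq_intros simp: power2_eq_square field_simps)
qed

lemma RD_power: assumes "RD f f'" shows "\<exists>h. RD (\<lambda>t. f t ^ n) h"
proof (induct n)
  case 0 then show ?case using RD_poly[of 1] by auto
next
  case (Suc n)
  then obtain h where "RD (\<lambda>t. f t ^ n) h" by blast
  from RD_mult[OF assms this] show ?case by auto
qed

lemma RD_cong: "RD f f' \<Longrightarrow> (\<And>t. t \<in> Gamma \<Longrightarrow> f t = g t) \<Longrightarrow> RD g f'"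
  unfolding RD_def using reg_cong has_field_derivative_transform_within_open[OF _ open_Gamma]
  by metis

lemma reg_RD: assumes "R f" shows "\<exists>f'. RD f f'"
proof -
  obtain p a b where f: "\<forall>t\<in>Gamma. f t = poly p t / (t ^ a * (t - 1) ^ b)" using assms(1) unfolding regular_Gamma_def by blast
  obtain h1 where h1: "RD (\<lambda>t. (1/t) ^ a) h1" using RD_power[OF RD_inv] by blast
  obtain h2 where h2: "RD (\<lambda>t. (1/(t-1)) ^ b) h2" using RD_power[OF RD_inv1] by blast
  from RD_mult[OF RD_mult[OF RD_poly h1] h2] obtain f' where
    "RD (\<lambda>t. poly p t * (1/t) ^ a * (1/(t-1)) ^ b) f'" by blast
  moreover have "\<And>t. t \<in> Gamma \<Longrightarrow> poly p t * (1/t) ^ a * (1/(t-1)) ^ b = f t"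
    using f by (simp add: field_simps power_one_over)
  ultimately show ?thesis using RD_cong by blast
qed

lemma field_poly_bezout:
  fixes p q :: "'a::field poly"
  assumes "\<And>d. d dvd p \<Longrightarrow> d dvd q \<Longrightarrow> is_unit d"
  shows "\<exists>u v. u * p + v * q = 1"
  using assms
proof (induct q arbitrary: p rule: measure_induct_rule[of "\<lambda>q. if q = 0 then 0 else Suc (degree q)"])
  case (less q p)
  show ?case
  proof (cases "q = 0")
    case True
    then have "is_unit p" using less.prems[of p] by auto
    then obtain k where "1 = p * k" by (auto elim: dvdE)
    then have "k * p + 0 * q = 1" by (simp add: mult.commute)
    thus ?thesis by blast
  next
    case False
    let ?r = "p mod q"
    have cd: "\<And>d. d dvd q \<Longrightarrow> d dvd ?r \<Longrightarrow> is_unit d"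
    proof -
      fix d assume "d dvd q" "d dvd ?r"
      moreover have "p = p div q * q + ?r" by simp
      ultimately have "d dvd p" by (metis dvd_add dvd_mult)
      thus "is_unit d" using less.prems \<open>d dvd q\<close> by blast
    qed
    have lt: "(if ?r = 0 then 0 else Suc (degree ?r)) < (if q = 0 then 0 else Suc (degree q))"
      using degree_mod_less[OF False, of p] False by auto
    from less.hyps[OF lt cd] obtain u v where uv: "u * q + v * ?r = 1" by blast
    have "v * p + (u - v * (p div q)) * q = u * q + v * (p - p div q * q)"
      by (simp add: algebra_simps)
    also have "p - p div q * q = ?r" by (simp add: minus_div_mult_eq_mod)
    finally have "v * p + (u - v * (p div q)) * q = 1" using uv by simp
    thus ?thesis by blast
  qed
qed

lemma fract_coprime:
  fixes F G :: "complex poly poly"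
  assumes "coprime F G" "d dvd fract_poly F" "d dvd fract_poly G"
  shows "is_unit d"
proof (cases "d = 0")
  case True
  then have "F = 0" "G = 0" using assms(2,3) by auto
  then show ?thesis using assms(1) by simp
next
  case False
  obtain c d' where d: "d = smult c (fract_poly d')" "content d' = 1"
    using content_decompose_fract[of d] by blast
  have "d = [:c:] * fract_poly d'" using d by simp
  hence dv: "fract_poly d' dvd d" by (metis dvd_triv_right)
  have "d' dvd F" using fract_poly_dvdD[OF dvd_trans[OF dv assms(2)] d(2)] .
  moreover have "d' dvd G" using fract_poly_dvdD[OF dvd_trans[OF dv assms(3)] d(2)] .
  ultimately have "is_unit d'" using assms(1) coprime_common_divisor by blast
  hence u1: "is_unit (fract_poly d')" by (rule fract_poly_is_unit)
  have "c \<noteq> 0" using False d by auto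
  hence "is_unit [:c:]" by (simp add: is_unit_const_poly_iff dvd_field_iff)
  show ?thesis using u1 \<open>is_unit [:c:]\<close> \<open>d = [:c:] * fract_poly d'\<close> is_unit_mult_iff by metis
qed

lemma coprime_elim:
  fixes F G :: "complex poly poly"
  assumes "coprime F G"
  shows "\<exists>U V d. d \<noteq> 0 \<and> U * F + V * G = [:d:]"
proof -
  obtain u v where uv: "u * fract_poly F + v * fract_poly G = 1"
    using field_poly_bezout[of "fract_poly F" "fract_poly G"] fract_coprime[OF assms] by blast
  obtain cu u' where u: "u = smult cu (fract_poly u')" using content_decompose_fract[of u] by blast
  obtain cv v' where v: "v = smult cv (fract_poly v')" using content_decompose_fract[of v] by blast
  obtain a1 b1 where c1: "cu = Fract a1 b1" "b1 \<noteq> 0" by (cases cu)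
  obtain a2 b2 where c2: "cv = Fract a2 b2" "b2 \<noteq> 0" by (cases cv)
  have k: "to_fract (b1 * b2) * cu = to_fract (a1 * b2)" "to_fract (b1 * b2) * cv = to_fract (a2 * b1)"
    using c1 c2 by (simp_all add: Fract_conv_to_fract field_simps)
  have "fract_poly (smult (a1 * b2) (u' * F) + smult (a2 * b1) (v' * G)) = smult (to_fract (b1 * b2) * cu) (fract_poly (u' * F)) + smult (to_fract (b1 * b2) * cv) (fract_poly (v' * G))"
    unfolding k by (simp add: fract_poly_add)
  also have "\<dots> = smult (to_fract (b1 * b2)) (u * fract_poly F + v * fract_poly G)"
    unfolding u v by (simp add: smult_add_right fract_poly_mult)
  also have "\<dots> = [:to_fract (b1 * b2):]"
    using uv by simp
  also have "\<dots> = fract_poly [:b1 * b2:]" by (simp add: map_poly_pCons)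
  finally have "fract_poly (smult (a1 * b2) (u' * F) + smult (a2 * b1) (v' * G)) = fract_poly [:b1 * b2:]" .
  hence "smult (a1 * b2) u' * F + smult (a2 * b1) v' * G = [:b1 * b2:]"
    by (simp only: fract_poly_eq_iff) simp
  moreover have "b1 * b2 \<noteq> 0" using c1 c2 by simp
  ultimately show ?thesis by blast
qed
lemma common_zeros_finite:
  fixes F G :: "complex poly poly"
  assumes "coprime F G"
  shows "finite {z. ev2 F (fst z) (snd z) = 0 \<and> ev2 G (fst z) (snd z) = 0}"
proof -
  obtain U V d where d: "d \<noteq> 0" "U * F + V * G = [:d:]" using coprime_elim[OF assms] by blast
  let ?S = "\<Union>x\<in>{x. poly d x = 0}. (\<lambda>y. (x, y)) ` {y. ev2 F x y = 0 \<and> ev2 G x y = 0}"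
  have sub: "{z. ev2 F (fst z) (snd z) = 0 \<and> ev2 G (fst z) (snd z) = 0} \<subseteq> ?S"
  proof
    fix z assume z: "z \<in> {z. ev2 F (fst z) (snd z) = 0 \<and> ev2 G (fst z) (snd z) = 0}"
    have "ev2 (U * F + V * G) (fst z) (snd z) = 0" using z by simp
    hence "poly d (fst z) = 0" using d(2) by (simp add: ev2_def)
    thus "z \<in> ?S" using z by (cases z) auto
  qed
  have fib: "finite {y. ev2 F x y = 0 \<and> ev2 G x y = 0}" for x
  proof -
    let ?qF = "map_poly (\<lambda>c. poly c x) F" and ?qG = "map_poly (\<lambda>c. poly c x) G"
    show ?thesis
    proof (cases "?qF = 0 \<and> ?qG = 0")
      case True
      have "\<And>n. poly (coeff F n) x = 0" "\<And>n. poly (coeff G n) x = 0"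
        using True by (metis coeff_0 coeff_map_poly poly_0)+
      hence "[:[:-x,1:]:] dvd F" "[:[:-x,1:]:] dvd G"
        by (simp_all add: const_poly_dvd_iff poly_eq_0_iff_dvd)
      hence "is_unit [:[:-x,1:]:]" using assms coprime_common_divisor by blast
      hence False by (simp add: is_unit_const_poly_iff is_unit_poly_iff)
      thus ?thesis ..
    next
      case False
      hence "?qF \<noteq> 0 \<or> ?qG \<noteq> 0" by blast
      then show ?thesis
      proof
        assume "?qF \<noteq> 0"
        hence "finite {y. poly ?qF y = 0}" by (rule poly_roots_finite)
        thus ?thesis by (rule finite_subset[rotated]) (auto simp: ev2_alt)
      next
        assume "?qG \<noteq> 0"
        hence "finite {y. poly ?qG y = 0}" by (rule poly_roots_finite)
        thus ?thesis by (rule finite_subset[rotated]) (auto simp: ev2_alt)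
      qed
    qed
  qed
  have "finite ?S" using poly_roots_finite[OF d(1)] fib by auto
  thus ?thesis using sub finite_subset by blast
qed

lemma roots01:
  fixes p :: "complex poly"
  assumes "p \<noteq> 0" "\<And>z. poly p z = 0 \<Longrightarrow> z = 0 \<or> z = 1"
  shows "\<exists>c i j. c \<noteq> 0 \<and> (\<forall>t. poly p t = c * t ^ i * (t - 1) ^ j)"
  using assms
proof (induct "degree p" arbitrary: p rule: less_induct)
  case less
  show ?case
  proof (cases "degree p = 0")
    case True
    then obtain c where "p = [:c:]" by (metis degree_eq_zeroE)
    thus ?thesis using less.prems(1) by (intro exI[of _ c] exI[of _ 0]) auto
  next
    case False
    hence "\<not> constant (poly p)" by (simp add: constant_degree)
    then obtain z where z: "poly p z = 0" using fundamental_theorem_of_algebra by blast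
    then obtain q where q: "p = [:-z,1:] * q" using poly_eq_0_iff_dvd by (metis dvdE)
    have q0: "q \<noteq> 0" using q less.prems(1) by auto
    have "degree p = degree [:-z,1::complex:] + degree q" using q q0 by (metis degree_mult_eq pCons_eq_0_iff one_neq_zero)
    hence dq: "degree q < degree p" by simp
    have "\<And>w. poly q w = 0 \<Longrightarrow> w = 0 \<or> w = 1" using q less.prems(2) by (metis mult_zero_right poly_mult)
    from less.hyps[OF dq q0 this] obtain c i j where cij: "c \<noteq> 0" "\<forall>t. poly q t = c * t ^ i * (t - 1) ^ j" by blast
    have pt: "\<forall>t. poly p t = (t - z) * (c * t ^ i * (t - 1) ^ j)"
    proof
      fix t have "poly p t = poly [:-z,1:] t * poly q t" unfolding q by (rule poly_mult)
      thus "poly p t = (t - z) * (c * t ^ i * (t - 1) ^ j)" using cij by simp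
    qed
    have "z = 0 \<or> z = 1" using less.prems(2) z by blast
    thus ?thesis
    proof
      assume "z = 0"
      thus ?thesis using cij pt by (intro exI[of _ c] exI[of _ "Suc i"] exI[of _ j]) (auto simp: algebra_simps)
    next
      assume "z = 1"
      thus ?thesis using cij pt by (intro exI[of _ c] exI[of _ i] exI[of _ "Suc j"]) (auto simp: algebra_simps)
    qed
  qed
qed

lemma two_in_Gamma: "(2::complex) \<in> Gamma" by (simp add: Gamma_iff)

lemma reg_partition:
  assumes "R f1" "R f2" "\<And>t. t \<in> Gamma \<Longrightarrow> f1 t \<noteq> 0 \<or> f2 t \<noteq> 0"
  shows "\<exists>u1 u2. R u1 \<and> R u2 \<and> (\<forall>t\<in>Gamma. u1 t * f1 t + u2 t * f2 t = 1)"
proof -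
  obtain p1 a1 b1 where f1: "\<forall>t\<in>Gamma. f1 t = poly p1 t / (t ^ a1 * (t - 1) ^ b1)" using assms(1) unfolding regular_Gamma_def by blast
  obtain p2 a2 b2 where f2: "\<forall>t\<in>Gamma. f2 t = poly p2 t / (t ^ a2 * (t - 1) ^ b2)" using assms(2) unfolding regular_Gamma_def by blast
  define g where "g = gcd p1 p2"
  define s where "s = fst (bezout_coefficients p1 p2)"
  define r where "r = snd (bezout_coefficients p1 p2)"
  have sr: "s * p1 + r * p2 = g" unfolding s_def r_def g_def by (rule bezout_coefficients_fst_snd)
  have g0: "g \<noteq> 0"
  proof
    assume "g = 0"
    hence "p1 = 0" "p2 = 0" unfolding g_def by auto
    thus False using assms(3)[OF two_in_Gamma] f1 f2 two_in_Gamma by auto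
  qed
  have "\<And>z. poly g z = 0 \<Longrightarrow> z = 0 \<or> z = 1"
  proof (rule ccontr)
    fix z assume z: "poly g z = 0" "\<not> (z = 0 \<or> z = 1)"
    hence zG: "z \<in> Gamma" by (simp add: Gamma_iff)
    have "poly p1 z = 0" "poly p2 z = 0" using z(1) unfolding g_def
      by (metis dvd_def gcd_dvd1 gcd_dvd2 mult_zero_left poly_mult)+
    thus False using assms(3)[OF zG] f1 f2 zG by auto
  qed
  from roots01[OF g0 this] obtain c i j where cij: "c \<noteq> 0" "\<forall>t. poly g t = c * t ^ i * (t - 1) ^ j" by blast
  define u1 where "u1 t = poly s t * t ^ a1 * (t - 1) ^ b1 / (c * t ^ i * (t - 1) ^ j)" for t
  define u2 where "u2 t = poly r t * t ^ a2 * (t - 1) ^ b2 / (c * t ^ i * (t - 1) ^ j)" for t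
  have "R u1" by (rule regI[of _ "smult (1/c) (s * [:0,1:]^a1 * [:-1,1:]^b1)" i j]) (simp add: u1_def poly_power)
  moreover have "R u2" by (rule regI[of _ "smult (1/c) (r * [:0,1:]^a2 * [:-1,1:]^b2)" i j]) (simp add: u2_def poly_power)
  moreover have "\<forall>t\<in>Gamma. u1 t * f1 t + u2 t * f2 t = 1"
  proof
    fix t assume t: "t \<in> Gamma"
    hence nz: "t \<noteq> 0" "t - 1 \<noteq> 0" by (auto simp: Gamma_iff)
    have "poly g t = poly s t * poly p1 t + poly r t * poly p2 t" using sr by (metis poly_add poly_mult)
    hence e: "c * t ^ i * (t - 1) ^ j = poly s t * poly p1 t + poly r t * poly p2 t" using cij by simp
    hence e2: "poly p1 t * poly s t + poly p2 t * poly r t = c * (t ^ i * (t - 1) ^ j)" by (simp add: algebra_simps)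
    show "u1 t * f1 t + u2 t * f2 t = 1"
      using f1 f2 t nz cij(1) unfolding u1_def u2_def by (simp add: field_simps) (simp add: e2)
  qed
  ultimately show ?thesis by blast
qed

lemma reg_unit_form:
  assumes "R f" "R h" "\<And>t. t \<in> Gamma \<Longrightarrow> f t * h t = 1"
  shows "\<exists>c i j a b. c \<noteq> 0 \<and> (\<forall>t\<in>Gamma. f t = c * t ^ i * (t - 1) ^ j / (t ^ a * (t - 1) ^ b))"
proof -
  obtain p a b where f: "\<forall>t\<in>Gamma. f t = poly p t / (t ^ a * (t - 1) ^ b)" using assms(1) unfolding regular_Gamma_def by blast
  obtain q c d where h: "\<forall>t\<in>Gamma. h t = poly q t / (t ^ c * (t - 1) ^ d)" using assms(2) unfolding regular_Gamma_def by blast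
  let ?m = "[:0,1:]^(a+c) * [:-1,1:]^(b+d) :: complex poly"
  have "Gamma \<subseteq> {t. poly (p * q - ?m) t = 0}"
  proof
    fix t assume t: "t \<in> Gamma"
    hence nz: "t \<noteq> 0" "t - 1 \<noteq> 0" by (auto simp: Gamma_iff)
    have "f t * h t = 1" using assms(3) t by blast
    hence "poly p t * poly q t = t ^ (a + c) * (t - 1) ^ (b + d)" using f h t nz
      by (simp add: field_simps power_add)
    thus "t \<in> {t. poly (p * q - ?m) t = 0}" by (simp add: poly_power)
  qed
  hence "p * q - ?m = 0" using infinite_Gamma poly_roots_finite by (metis infinite_super)
  hence pq: "p * q = ?m" by simp
  have p0: "p \<noteq> 0" using pq by auto
  have "\<And>z. poly p z = 0 \<Longrightarrow> z = 0 \<or> z = 1"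
  proof -
    fix z assume "poly p z = 0"
    hence "poly ?m z = 0" by (metis pq mult_zero_left poly_mult)
    thus "z = 0 \<or> z = 1" by (auto simp: poly_power)
  qed
  from roots01[OF p0 this] obtain k i j where "k \<noteq> 0" "\<forall>t. poly p t = k * t ^ i * (t - 1) ^ j" by blast
  thus ?thesis using f by metis
qed

lemma P2_sum: "finite S \<Longrightarrow> (\<And>i. i \<in> S \<Longrightarrow> P2 (f i)) \<Longrightarrow> P2 (\<lambda>x y. \<Sum>i\<in>S. f i x y)"
proof (induct S rule: finite_induct)
  case empty then show ?case using P2_const[of 0] by simp
next
  case (insert a S) then show ?case using P2_add[of "f a" "\<lambda>x y. \<Sum>i\<in>S. f i x y"] by simp
qed

lemma P2_power: "P2 f \<Longrightarrow> P2 (\<lambda>x y. f x y ^ n)"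
proof (induct n)
  case 0 then show ?case using P2_const[of 1] by simp
next
  case (Suc n) then show ?case using P2_mult[of f "\<lambda>x y. f x y ^ n"] by simp
qed

lemma poly2_ev2: assumes "poly2 f" shows "\<exists>F. \<forall>a b. f (a, b) = ev2 F a b"
proof -
  obtain c N where c: "\<forall>x y. f (x, y) = (\<Sum>i\<le>N. \<Sum>j\<le>N. c i j * x ^ i * y ^ j)"
    using assms unfolding poly2_def by blast
  have "P2 (\<lambda>x y. \<Sum>i\<le>N. \<Sum>j\<le>N. c i j * x ^ i * y ^ j)"
    by (intro P2_sum P2_mult P2_const P2_power P2_x P2_y) auto
  then obtain F where "\<forall>x y. (\<Sum>i\<le>N. \<Sum>j\<le>N. c i j * x ^ i * y ^ j) = ev2 F x y"
    using P2_ex by blast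
  thus ?thesis using c by auto
qed

lemma dX_deriv: "((\<lambda>s. ev2 A s b) has_field_derivative ev2 (dX A) a b) (at a)"
  using ev2_chain[of "\<lambda>s. s" 1 a UNIV "\<lambda>s. b" 0 A] by simp

lemma dY_deriv: "((\<lambda>s. ev2 A a s) has_field_derivative ev2 (dY A) a b) (at b)"
  using ev2_chain[of "\<lambda>s. a" 0 b UNIV "\<lambda>s. s" 1 A] by simp

lemma dX_mult: "ev2 (dX (F * G)) a b = ev2 (dX F) a b * ev2 G a b + ev2 F a b * ev2 (dX G) a b"
proof -
  have "((\<lambda>s. ev2 F s b * ev2 G s b) has_field_derivative
           ev2 (dX F) a b * ev2 G a b + ev2 F a b * ev2 (dX G) a b) (at a)"
    using DERIV_mult'[OF dX_deriv[of F b a] dX_deriv[of G b a]] by (simp add: algebra_simps)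
  moreover have "((\<lambda>s. ev2 F s b * ev2 G s b) has_field_derivative ev2 (dX (F * G)) a b) (at a)"
    using dX_deriv[of "F * G" b a] by simp
  ultimately show ?thesis using DERIV_unique by blast
qed

lemma dY_mult: "ev2 (dY (F * G)) a b = ev2 (dY F) a b * ev2 G a b + ev2 F a b * ev2 (dY G) a b"
proof -
  have "((\<lambda>s. ev2 F a s * ev2 G a s) has_field_derivative
           ev2 (dY F) a b * ev2 G a b + ev2 F a b * ev2 (dY G) a b) (at b)"
    using DERIV_mult'[OF dY_deriv[of F a b] dY_deriv[of G a b]] by (simp add: algebra_simps)
  moreover have "((\<lambda>s. ev2 F a s * ev2 G a s) has_field_derivative ev2 (dY (F * G)) a b) (at b)"
    using dY_deriv[of "F * G" a b] by simp
  ultimately show ?thesis using DERIV_unique by blast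
qed

lemma reg_divided_diff:
  assumes "R f" "t0 \<in> Gamma"
  shows "\<exists>b. R b \<and> (\<forall>t\<in>Gamma. f t - f t0 = (t - t0) * b t)"
proof -
  obtain p a b where f: "\<forall>t\<in>Gamma. f t = poly p t / (t ^ a * (t - 1) ^ b)" using assms(1) unfolding regular_Gamma_def by blast
  have t0: "t0 \<noteq> 0" "t0 - 1 \<noteq> 0" using assms(2) by (auto simp: Gamma_iff)
  define K where "K = t0 ^ a * (t0 - 1) ^ b"
  have K0: "K \<noteq> 0" using t0 unfolding K_def by simp
  define N where "N = smult K p - smult (poly p t0) ([:0,1:]^a * [:-1,1:]^b)"
  have "poly N t0 = 0" unfolding N_def K_def by (simp add: poly_power)
  then obtain N1 where N1: "N = [:-t0,1:] * N1" using poly_eq_0_iff_dvd by (metis dvdE)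
  define bb where "bb t = poly (smult (1/K) N1) t / (t ^ a * (t - 1) ^ b)" for t
  have "R bb" unfolding bb_def by (rule regI[of _ "smult (1/K) N1" a b]) simp
  moreover have "\<forall>t\<in>Gamma. f t - f t0 = (t - t0) * bb t"
  proof
    fix t assume t: "t \<in> Gamma"
    hence nz: "t \<noteq> 0" "t - 1 \<noteq> 0" by (auto simp: Gamma_iff)
    have "poly N t = (t - t0) * poly N1 t" unfolding N1 by (simp add: algebra_simps)
    hence e: "K * poly p t - poly p t0 * (t ^ a * (t - 1) ^ b) = (t - t0) * poly N1 t"
      unfolding N_def by (simp add: poly_power)
    have "f t - f t0 = (K * poly p t - poly p t0 * (t ^ a * (t - 1) ^ b)) / (K * (t ^ a * (t - 1) ^ b))"
      using f t assms(2) nz K0 unfolding K_def by (simp add: field_simps)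
    also have "\<dots> = (t - t0) * bb t" unfolding e bb_def using K0 nz by (simp add: field_simps)
    finally show "f t - f t0 = (t - t0) * bb t" .
  qed
  ultimately show ?thesis by blast
qed

lemma g_Gamma: "t \<in> Gamma \<Longrightarrow> 1 / (1 - t) \<in> Gamma"
  by (auto simp: Gamma_iff field_simps)
lemma gi_Gamma: "t \<in> Gamma \<Longrightarrow> 1 - 1 / t \<in> Gamma"
  by (auto simp: Gamma_iff field_simps)
lemma g_gi: "t \<in> Gamma \<Longrightarrow> 1 / (1 - (1 - 1 / t)) = t"
  by (auto simp: Gamma_iff field_simps)

locale setting =
  fixes x y :: "complex \<Rightarrow> complex" and PP QQ RR H1 H2 K1 K2 :: "complex poly poly"
  assumes Rx: "R x" and Ry: "R y"
  and PP: "\<And>t. t \<in> Gamma \<Longrightarrow> ev2 PP (x t) (y t) = t"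
  and QQ: "\<And>t. t \<in> Gamma \<Longrightarrow> ev2 QQ (x t) (y t) = 1 / t"
  and RR: "\<And>t. t \<in> Gamma \<Longrightarrow> ev2 RR (x t) (y t) = 1 / (t - 1)"
  and Hc1: "\<And>t. t \<in> Gamma \<Longrightarrow> ev2 H1 (x t) (y t) = x (1 / (1 - t))"
  and Hc2: "\<And>t. t \<in> Gamma \<Longrightarrow> ev2 H2 (x t) (y t) = y (1 / (1 - t))"
  and Kinv1: "\<And>a b. ev2 K1 (ev2 H1 a b) (ev2 H2 a b) = a"
  and Kinv2: "\<And>a b. ev2 K2 (ev2 H1 a b) (ev2 H2 a b) = b"
  and Hinv1: "\<And>a b. ev2 H1 (ev2 K1 a b) (ev2 K2 a b) = a"
  and Hinv2: "\<And>a b. ev2 H2 (ev2 K1 a b) (ev2 K2 a b) = b"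
begin

definition inI :: "complex poly poly \<Rightarrow> bool" where
  "inI A \<longleftrightarrow> (\<forall>t\<in>Gamma. ev2 A (x t) (y t) = 0)"

lemma inI_dvd: "inI A \<Longrightarrow> A dvd B \<Longrightarrow> inI B"
  unfolding inI_def by (auto elim!: dvdE)

lemma inI_prime: assumes "inI (A * B)" shows "inI A \<or> inI B"
  using reg_prod_zero[OF reg_ev2[OF Rx Ry, of A] reg_ev2[OF Rx Ry, of B]] assms
  unfolding inI_def by auto

lemma not_inI_1: "\<not> inI 1"
  unfolding inI_def using two_in_Gamma by auto

lemma inI_prod_mset: "inI (prod_mset M) \<Longrightarrow> \<exists>p\<in>#M. inI p"
proof (induct M)
  case empty then show ?case using not_inI_1 by simp
next
  case (add p M) then show ?case using inI_prime[of p "prod_mset M"] by auto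
qed

lemma reg_to_poly: assumes "R b" shows "\<exists>B. \<forall>t\<in>Gamma. ev2 B (x t) (y t) = b t"
proof -
  obtain p i j where f: "\<forall>t\<in>Gamma. b t = poly p t / (t ^ i * (t - 1) ^ j)" using assms unfolding regular_Gamma_def by blast
  have "P2 (\<lambda>u v. poly p (ev2 PP u v) * ev2 QQ u v ^ i * ev2 RR u v ^ j)"
    by (intro P2_mult P2_poly_comp P2_power P2_ev2)
  then obtain B where B: "\<forall>u v. poly p (ev2 PP u v) * ev2 QQ u v ^ i * ev2 RR u v ^ j = ev2 B u v"
    using P2_ex by blast
  have "\<forall>t\<in>Gamma. ev2 B (x t) (y t) = b t"
  proof
    fix t assume t: "t \<in> Gamma"
    show "ev2 B (x t) (y t) = b t" using B[rule_format, of "x t" "y t", symmetric] PP[OF t] QQ[OF t] RR[OF t] f t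
      by (simp add: power_one_over field_simps)
  qed
  thus ?thesis by blast
qed

lemma tau_inj: "s \<in> Gamma \<Longrightarrow> t \<in> Gamma \<Longrightarrow> x s = x t \<Longrightarrow> y s = y t \<Longrightarrow> s = t"
  using PP by metis

lemma infinite_curve: "infinite ((\<lambda>t. (x t, y t)) ` Gamma)"
proof
  assume "finite ((\<lambda>t. (x t, y t)) ` Gamma)"
  moreover have "inj_on (\<lambda>t. (x t, y t)) Gamma" by (auto intro!: inj_onI tau_inj)
  ultimately show False using infinite_Gamma finite_imageD by blast
qed

lemma exF: "\<exists>F. prime_elem F \<and> inI F \<and> (\<forall>G. inI G \<longrightarrow> F dvd G)"
proof -
  define F0 where "F0 = PP * QQ - 1"
  have I0: "inI F0" unfolding inI_def F0_def using PP QQ by (auto simp: Gamma_iff)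
  have F00: "F0 \<noteq> 0"
  proof
    assume "F0 = 0"
    hence "PP * QQ = 1" unfolding F0_def by simp
    hence "is_unit PP" by (metis dvd_triv_left)
    then obtain c where "PP = [:c:]" "is_unit c" by (auto simp: is_unit_poly_iff)
    then obtain c0 where "PP = [:[:c0:]:]" by (auto simp: is_unit_poly_iff)
    hence "ev2 PP (x 2) (y 2) = ev2 PP (x 3) (y 3)" by simp
    moreover have "(3::complex) \<in> Gamma" by (simp add: Gamma_iff)
    ultimately show False using PP two_in_Gamma by force
  qed
  obtain A where A: "\<And>p. p \<in># A \<Longrightarrow> prime p" "normalize (prod_mset A) = normalize F0"
    using prime_factorization_exists'[OF F00] by blast
  have "F0 dvd prod_mset A" by (metis A(2) dvd_normalize_iff dvd_refl)
  hence "inI (prod_mset A)" using I0 inI_dvd by blast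
  then obtain F where F: "F \<in># A" "inI F" using inI_prod_mset by blast
  have pF: "prime_elem F" using A(1)[OF F(1)] by (simp add: prime_def)
  have "\<forall>G. inI G \<longrightarrow> F dvd G"
  proof (intro allI impI, rule ccontr)
    fix G assume G: "inI G" "\<not> F dvd G"
    have cop: "coprime F G" using prime_elem_imp_coprime[OF pF G(2)] .
    have "(\<lambda>t. (x t, y t)) ` Gamma \<subseteq> {z. ev2 F (fst z) (snd z) = 0 \<and> ev2 G (fst z) (snd z) = 0}"
      using F(2) G(1) unfolding inI_def by auto
    thus False using common_zeros_finite[OF cop] infinite_curve finite_subset by blast
  qed
  thus ?thesis using pF F(2) by blast
qed

end

lemma dX_unique: "((\<lambda>s. ev2 A s b) has_field_derivative D) (at a) \<Longrightarrow> ev2 (dX A) a b = D"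
  using DERIV_unique dX_deriv by blast
lemma dY_unique: "((\<lambda>s. ev2 A a s) has_field_derivative D) (at b) \<Longrightarrow> ev2 (dY A) a b = D"
  using DERIV_unique dY_deriv by blast

lemma deriv_on_Gamma:
  assumes "t \<in> Gamma" "(f has_field_derivative D) (at t)" "(g has_field_derivative E) (at t)"
    "\<And>s. s \<in> Gamma \<Longrightarrow> f s = g s"
  shows "D = E"
proof -
  have "(g has_field_derivative D) (at t)"
    using has_field_derivative_transform_within_open[OF assms(2) open_Gamma assms(1)] assms(4) by blast
  thus ?thesis using DERIV_unique assms(3) by blast
qed

context setting
begin

lemma smooth:
  assumes F: "inI F" "\<forall>G. inI G \<longrightarrow> F dvd G" and t0: "t0 \<in> Gamma"
  shows "ev2 (dX F) (x t0) (y t0) \<noteq> 0 \<or> ev2 (dY F) (x t0) (y t0) \<noteq> 0"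
proof (rule ccontr)
  assume "\<not> ?thesis"
  hence gF: "ev2 (dX F) (x t0) (y t0) = 0" "ev2 (dY F) (x t0) (y t0) = 0" by auto
  define x0 where "x0 = x t0"
  define y0 where "y0 = y t0"
  have F0: "ev2 F x0 y0 = 0" using F(1) t0 unfolding inI_def x0_def y0_def by auto
  have zg: "ev2 (dX G) x0 y0 = 0 \<and> ev2 (dY G) x0 y0 = 0" if G: "inI G" for G
  proof -
    have "F dvd G" using F(2) G by blast
    then obtain G1 where "G = F * G1" by (auto elim: dvdE)
    thus ?thesis using gF F0 unfolding x0_def y0_def by (simp add: dX_mult dY_mult)
  qed
  have P0: "ev2 PP x0 y0 = t0" using PP[OF t0] unfolding x0_def y0_def .
  obtain b1 where b1: "R b1" "\<forall>t\<in>Gamma. x t - x t0 = (t - t0) * b1 t" using reg_divided_diff[OF Rx t0] by blast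
  obtain b2 where b2: "R b2" "\<forall>t\<in>Gamma. y t - y t0 = (t - t0) * b2 t" using reg_divided_diff[OF Ry t0] by blast
  obtain B1 where B1: "\<forall>t\<in>Gamma. ev2 B1 (x t) (y t) = b1 t" using reg_to_poly[OF b1(1)] by blast
  obtain B2 where B2: "\<forall>t\<in>Gamma. ev2 B2 (x t) (y t) = b2 t" using reg_to_poly[OF b2(1)] by blast
  define D1 where "D1 = [:[:0,1:]:] - [:[:x0:]:] - (PP - [:[:t0:]:]) * B1"
  define D2 where "D2 = [:0,1:] - [:[:y0:]:] - (PP - [:[:t0:]:]) * B2"
  have "inI D1" unfolding inI_def D1_def using PP B1 b1 by (simp add: x0_def)
  hence z1: "ev2 (dX D1) x0 y0 = 0" "ev2 (dY D1) x0 y0 = 0" using zg by auto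
  have "inI D2" unfolding inI_def D2_def using PP B2 b2 by (simp add: y0_def)
  hence z2: "ev2 (dX D2) x0 y0 = 0" "ev2 (dY D2) x0 y0 = 0" using zg by auto
  have "((\<lambda>s. s - x0 - (ev2 PP s y0 - t0) * ev2 B1 s y0) has_field_derivative
     1 - 0 - ((ev2 PP x0 y0 - t0) * ev2 (dX B1) x0 y0 + (ev2 (dX PP) x0 y0 - 0) * ev2 B1 x0 y0)) (at x0)"
    by (intro DERIV_diff DERIV_mult' DERIV_ident DERIV_const dX_deriv)
  hence e1: "ev2 (dX D1) x0 y0 = 1 - ev2 (dX PP) x0 y0 * ev2 B1 x0 y0"
    using dX_unique[of D1 y0 _ x0] P0 unfolding D1_def by simp
  have "((\<lambda>s. x0 - x0 - (ev2 PP x0 s - t0) * ev2 B1 x0 s) has_field_derivative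
     0 - 0 - ((ev2 PP x0 y0 - t0) * ev2 (dY B1) x0 y0 + (ev2 (dY PP) x0 y0 - 0) * ev2 B1 x0 y0)) (at y0)"
    by (intro DERIV_diff DERIV_mult' DERIV_ident DERIV_const dY_deriv)
  hence e2: "ev2 (dY D1) x0 y0 = - ev2 (dY PP) x0 y0 * ev2 B1 x0 y0"
    using dY_unique[of D1 x0 _ y0] P0 unfolding D1_def by simp
  have "((\<lambda>s. y0 - y0 - (ev2 PP s y0 - t0) * ev2 B2 s y0) has_field_derivative
     0 - 0 - ((ev2 PP x0 y0 - t0) * ev2 (dX B2) x0 y0 + (ev2 (dX PP) x0 y0 - 0) * ev2 B2 x0 y0)) (at x0)"
    by (intro DERIV_diff DERIV_mult' DERIV_ident DERIV_const dX_deriv)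
  hence e3: "ev2 (dX D2) x0 y0 = - ev2 (dX PP) x0 y0 * ev2 B2 x0 y0"
    using dX_unique[of D2 y0 _ x0] P0 unfolding D2_def by simp
  have "((\<lambda>s. s - y0 - (ev2 PP x0 s - t0) * ev2 B2 x0 s) has_field_derivative
     1 - 0 - ((ev2 PP x0 y0 - t0) * ev2 (dY B2) x0 y0 + (ev2 (dY PP) x0 y0 - 0) * ev2 B2 x0 y0)) (at y0)"
    by (intro DERIV_diff DERIV_mult' DERIV_ident DERIV_const dY_deriv)
  hence e4: "ev2 (dY D2) x0 y0 = 1 - ev2 (dY PP) x0 y0 * ev2 B2 x0 y0"
    using dY_unique[of D2 x0 _ y0] P0 unfolding D2_def by simp
  show False using z1 z2 e1 e2 e3 e4 by (auto simp: algebra_simps)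
qed

lemma Kconst:
  assumes F: "prime_elem F" "inI F" "\<forall>G. inI G \<longrightarrow> F dvd G"
  shows "\<exists>l. l \<noteq> 0 \<and> (\<forall>a b. ev2 F (ev2 H1 a b) (ev2 H2 a b) = l * ev2 F a b)"
proof -
  obtain Fh where Fh: "\<forall>a b. ev2 F (ev2 H1 a b) (ev2 H2 a b) = ev2 Fh a b"
    using P2_ex[OF P2_comp[OF P2_ev2 P2_ev2, of F H1 H2]] by blast
  obtain Fk where Fk: "\<forall>a b. ev2 F (ev2 K1 a b) (ev2 K2 a b) = ev2 Fk a b"
    using P2_ex[OF P2_comp[OF P2_ev2 P2_ev2, of F K1 K2]] by blast
  have "inI Fh" unfolding inI_def
  proof
    fix t assume t: "t \<in> Gamma"
    have "ev2 Fh (x t) (y t) = ev2 F (x (1 / (1 - t))) (y (1 / (1 - t)))"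
      using Fh Hc1[OF t] Hc2[OF t] by metis
    thus "ev2 Fh (x t) (y t) = 0" using F(2) g_Gamma[OF t] unfolding inI_def by auto
  qed
  then obtain K where K: "Fh = F * K" using F(3) by (auto elim: dvdE)
  have "inI Fk" unfolding inI_def
  proof
    fix t assume t: "t \<in> Gamma"
    define s where "s = 1 - 1 / t"
    have s: "s \<in> Gamma" "1 / (1 - s) = t" using gi_Gamma[OF t] g_gi[OF t] unfolding s_def by auto
    have "ev2 K1 (x t) (y t) = x s" using Kinv1 Hc1[OF s(1)] Hc2[OF s(1)] s(2) by metis
    moreover have "ev2 K2 (x t) (y t) = y s" using Kinv2 Hc1[OF s(1)] Hc2[OF s(1)] s(2) by metis
    ultimately have "ev2 Fk (x t) (y t) = ev2 F (x s) (y s)" using Fk by metis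
    thus "ev2 Fk (x t) (y t) = 0" using F(2) s(1) unfolding inI_def by auto
  qed
  then obtain K' where K': "Fk = F * K'" using F(3) by (auto elim: dvdE)
  obtain Kc where Kc: "\<forall>a b. ev2 K (ev2 K1 a b) (ev2 K2 a b) = ev2 Kc a b"
    using P2_ex[OF P2_comp[OF P2_ev2 P2_ev2, of K K1 K2]] by blast
  have "\<forall>a b. ev2 (F * (K' * Kc - 1)) a b = 0"
  proof (intro allI)
    fix a b
    have "ev2 F a b = ev2 F (ev2 H1 (ev2 K1 a b) (ev2 K2 a b)) (ev2 H2 (ev2 K1 a b) (ev2 K2 a b))"
      using Hinv1 Hinv2 by simp
    also have "\<dots> = ev2 F (ev2 K1 a b) (ev2 K2 a b) * ev2 K (ev2 K1 a b) (ev2 K2 a b)"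
      using Fh K by simp
    also have "\<dots> = ev2 F a b * ev2 K' a b * ev2 Kc a b" using Fk K' Kc by simp
    finally show "ev2 (F * (K' * Kc - 1)) a b = 0" by (simp add: algebra_simps)
  qed
  hence "F * (K' * Kc - 1) = 0" using ev2_zero_imp by blast
  moreover have "F \<noteq> 0" using F(1) by auto
  ultimately have "K' * Kc = 1" by simp
  hence KK: "\<And>a b. ev2 K' a b * ev2 Kc a b = 1" by (metis ev2_1 ev2_mult)
  have "\<And>a b. ev2 K a b \<noteq> 0"
  proof
    fix a b assume "ev2 K a b = 0"
    hence "ev2 Kc (ev2 H1 a b) (ev2 H2 a b) = 0" using Kc Kinv1 Kinv2 by metis
    thus False using KK[of "ev2 H1 a b" "ev2 H2 a b"] by simp
  qed
  then obtain l where l: "\<forall>a b. ev2 K a b = l" using ev2_nonzero_const by blast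
  have "l \<noteq> 0" using l \<open>\<And>a b. ev2 K a b \<noteq> 0\<close> by metis
  moreover have "\<forall>a b. ev2 F (ev2 H1 a b) (ev2 H2 a b) = l * ev2 F a b" using Fh K l by simp
  ultimately show ?thesis by blast
qed

lemma Jconst:
  "\<exists>J. J \<noteq> 0 \<and> (\<forall>a b. ev2 (dX H1) a b * ev2 (dY H2) a b - ev2 (dY H1) a b * ev2 (dX H2) a b = J)"
proof -
  have "\<And>a b. ev2 (dX H1 * dY H2 - dY H1 * dX H2) a b \<noteq> 0"
  proof -
    fix a b
    let ?h1 = "ev2 H1 a b" and ?h2 = "ev2 H2 a b"
    define p where "p = ev2 (dX H1) a b"
    define q where "q = ev2 (dY H1) a b"
    define r where "r = ev2 (dX H2) a b"
    define s where "s = ev2 (dY H2) a b"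
    define P where "P = ev2 (dX K1) ?h1 ?h2"
    define Q where "Q = ev2 (dY K1) ?h1 ?h2"
    define RR' where "RR' = ev2 (dX K2) ?h1 ?h2"
    define S where "S = ev2 (dY K2) ?h1 ?h2"
    have c1: "((\<lambda>u. ev2 K1 (ev2 H1 u b) (ev2 H2 u b)) has_field_derivative P * p + Q * r) (at a)"
      using ev2_chain[OF dX_deriv[of H1 b a] dX_deriv[of H2 b a], of K1] unfolding P_def Q_def p_def r_def by simp
    have f1: "(\<lambda>u. ev2 K1 (ev2 H1 u b) (ev2 H2 u b)) = (\<lambda>u. u)" by (rule ext) (rule Kinv1)
    have e1: "P * p + Q * r = 1" using DERIV_unique[OF c1[unfolded f1] DERIV_ident] .
    have c2: "((\<lambda>u. ev2 K2 (ev2 H1 u b) (ev2 H2 u b)) has_field_derivative RR' * p + S * r) (at a)"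
      using ev2_chain[OF dX_deriv[of H1 b a] dX_deriv[of H2 b a], of K2] unfolding RR'_def S_def p_def r_def by simp
    have f2: "(\<lambda>u. ev2 K2 (ev2 H1 u b) (ev2 H2 u b)) = (\<lambda>u. b)" by (rule ext) (rule Kinv2)
    have e2: "RR' * p + S * r = 0" using DERIV_unique[OF c2[unfolded f2] DERIV_const] .
    have c3: "((\<lambda>u. ev2 K1 (ev2 H1 a u) (ev2 H2 a u)) has_field_derivative P * q + Q * s) (at b)"
      using ev2_chain[OF dY_deriv[of H1 a b] dY_deriv[of H2 a b], of K1] unfolding P_def Q_def q_def s_def by simp
    have f3: "(\<lambda>u. ev2 K1 (ev2 H1 a u) (ev2 H2 a u)) = (\<lambda>u. a)" by (rule ext) (rule Kinv1)
    have e3: "P * q + Q * s = 0" using DERIV_unique[OF c3[unfolded f3] DERIV_const] .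
    have c4: "((\<lambda>u. ev2 K2 (ev2 H1 a u) (ev2 H2 a u)) has_field_derivative RR' * q + S * s) (at b)"
      using ev2_chain[OF dY_deriv[of H1 a b] dY_deriv[of H2 a b], of K2] unfolding RR'_def S_def q_def s_def by simp
    have f4: "(\<lambda>u. ev2 K2 (ev2 H1 a u) (ev2 H2 a u)) = (\<lambda>u. u)" by (rule ext) (rule Kinv2)
    have e4: "RR' * q + S * s = 1" using DERIV_unique[OF c4[unfolded f4] DERIV_ident] .
    have "(P * S - Q * RR') * (p * s - q * r) = 1"
    proof -
      note e = e1 e2 e3 e4
      have "(P * S - Q * RR') * (p * s - q * r) = (P * p + Q * r) * (RR' * q + S * s) - (P * q + Q * s) * (RR' * p + S * r)"
        by (simp add: algebra_simps)
      thus ?thesis using e by simp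
    qed
    hence "p * s - q * r \<noteq> 0" by auto
    thus "ev2 (dX H1 * dY H2 - dY H1 * dX H2) a b \<noteq> 0" unfolding p_def q_def r_def s_def by simp
  qed
  then obtain J where J: "\<forall>a b. ev2 (dX H1 * dY H2 - dY H1 * dX H2) a b = J" using ev2_nonzero_const by blast
  have "J \<noteq> 0" using J \<open>\<And>a b. ev2 (dX H1 * dY H2 - dY H1 * dX H2) a b \<noteq> 0\<close> by metis
  thus ?thesis using J by auto
qed

end

lemma alg_key:
  fixes FX FY A B C D l fx fy u v U V G al be J :: complex
  assumes e1: "FX*A + FY*C = l*fx" and e2: "FX*B + FY*D = l*fy"
    and e3: "A*u + B*v = U*G" and e4: "C*u + D*v = V*G"
    and e5: "fy = al*u" and e6: "fx = -al*v" and e7: "FY = be*U" and e8: "FX = -be*V"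
    and e9: "J = A*D - B*C" and nz: "u \<noteq> 0 \<or> v \<noteq> 0"
  shows "l*G*al = J*be"
proof -
  have "l*G*al*u = G*(FX*B + FY*D)" using e2 e5 by (simp add: algebra_simps)
  also have "\<dots> = be*(D*(U*G) - B*(V*G))" using e7 e8 by (simp add: algebra_simps)
  also have "\<dots> = be*(D*(A*u + B*v) - B*(C*u + D*v))" using e3 e4 by simp
  also have "\<dots> = J*be*u" unfolding e9 by (simp add: algebra_simps)
  finally have a1: "(l*G*al - J*be) * u = 0" by (simp add: algebra_simps)
  have "l*G*al*v = - G*(FX*A + FY*C)" using e1 e6 by (simp add: algebra_simps)
  also have "\<dots> = be*(A*(V*G) - C*(U*G))" using e7 e8 by (simp add: algebra_simps)
  also have "\<dots> = be*(A*(C*u + D*v) - C*(A*u + B*v))" using e3 e4 by simp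
  also have "\<dots> = J*be*v" unfolding e9 by (simp add: algebra_simps)
  finally have a2: "(l*G*al - J*be) * v = 0" by (simp add: algebra_simps)
  show ?thesis using a1 a2 nz by auto
qed

lemma real_contra:
  fixes L M k :: real
  assumes pos: "L > 0" "M > 0" "k > 0"
    and e1: "L * (k * 2^i / 2^a) = M * (k * 2^j / 2^b)"
    and e2: "L / 4 * (k * 2^j / 2^b) = M * (k * (1/2)^i * (1/2)^j / ((1/2)^a * (1/2)^b))"
  shows False
proof -
  have f1: "L * 2^i * 2^b = M * 2^j * 2^a" using e1 pos by (simp add: field_simps)
  have f2: "L * 2^j * 2^i * 2^j = 4 * M * 2^a * 2^b * 2^b" using e2 pos by (simp add: field_simps power_one_over)
  have "M * 2^a * (2^j * 2^j * 2^j) = (L * 2^i * 2^b) * 2^j * 2^j" using f1 by (simp add: algebra_simps)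
  also have "\<dots> = (L * 2^j * 2^i * 2^j) * 2^b" by (simp add: algebra_simps)
  also have "\<dots> = M * 2^a * (4 * 2^b * 2^b * 2^b)" using f2 by (simp add: algebra_simps)
  finally have "(2::real)^j * 2^j * 2^j = 4 * 2^b * 2^b * 2^b" using pos by simp
  hence "(2::real) ^ (3 * j) = 4 * 2 ^ (3 * b)" by (simp add: power_add power_mult_distrib numeral_3_eq_3 algebra_simps power2_eq_square)
  also have "(4::real) * 2 ^ (3 * b) = 2 ^ (3 * b + 2)" by (simp add: power_add)
  finally have p: "(2::real) ^ (3 * j) = 2 ^ (3 * b + 2)" .
  have two: "1 < (2::real)" by simp
  have "3 * j = 3 * b + 2" using power_inject_exp[OF two] p by blast
  thus False by presburger
qed

context setting
begin

lemma final: False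
proof -
  obtain F where F: "prime_elem F" "inI F" "\<forall>G. inI G \<longrightarrow> F dvd G" using exF by blast
  obtain l where l: "l \<noteq> 0" "\<forall>a b. ev2 F (ev2 H1 a b) (ev2 H2 a b) = l * ev2 F a b" using Kconst[OF F] by blast
  obtain J where J: "J \<noteq> 0" "\<forall>a b. ev2 (dX H1) a b * ev2 (dY H2) a b - ev2 (dY H1) a b * ev2 (dX H2) a b = J"
    using Jconst by blast
  obtain x' where x': "RD x x'" using reg_RD[OF Rx] by blast
  obtain y' where y': "RD y y'" using reg_RD[OF Ry] by blast
  define gg where "gg t = 1 / (1 - t)" for t :: complex
  define gd where "gd t = 1 / (1 - t)^2" for t :: complex
  have ggG: "t \<in> Gamma \<Longrightarrow> gg t \<in> Gamma" for t unfolding gg_def using g_Gamma by blast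
  have ggd: "(gg has_field_derivative gd t) (at t)" if t: "t \<in> Gamma" for t
  proof -
    have "1 - t \<noteq> 0" using t by (auto simp: Gamma_iff)
    thus ?thesis unfolding gg_def gd_def
      by (auto intro!: derivative_eq_intros simp: power2_eq_square field_simps)
  qed
  have dx: "t \<in> Gamma \<Longrightarrow> (x has_field_derivative x' t) (at t)" for t using x' unfolding RD_def by blast
  have dy: "t \<in> Gamma \<Longrightarrow> (y has_field_derivative y' t) (at t)" for t using y' unfolding RD_def by blast
  define fx where "fx t = ev2 (dX F) (x t) (y t)" for t
  define fy where "fy t = ev2 (dY F) (x t) (y t)" for t
  have tnz: "x' t \<noteq> 0 \<or> y' t \<noteq> 0" if t: "t \<in> Gamma" for t
  proof -
    have "ev2 (dX PP) (x t) (y t) * x' t + ev2 (dY PP) (x t) (y t) * y' t = 1"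
      using deriv_on_Gamma[OF t ev2_chain[OF dx[OF t] dy[OF t], of PP] DERIV_ident] PP by blast
    thus ?thesis by auto
  qed
  have tang: "fx t * x' t + fy t * y' t = 0" if t: "t \<in> Gamma" for t
    using deriv_on_Gamma[OF t ev2_chain[OF dx[OF t] dy[OF t], of F] DERIV_const[of 0]] F(2)
    unfolding inI_def fx_def fy_def by blast
  have hc1: "ev2 (dX H1) (x t) (y t) * x' t + ev2 (dY H1) (x t) (y t) * y' t = x' (gg t) * gd t"
    if t: "t \<in> Gamma" for t
    using deriv_on_Gamma[OF t ev2_chain[OF dx[OF t] dy[OF t], of H1] DERIV_chain2[OF dx[OF ggG[OF t]] ggd[OF t]]]
      Hc1 unfolding gg_def by blast
  have hc2: "ev2 (dX H2) (x t) (y t) * x' t + ev2 (dY H2) (x t) (y t) * y' t = y' (gg t) * gd t"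
    if t: "t \<in> Gamma" for t
    using deriv_on_Gamma[OF t ev2_chain[OF dx[OF t] dy[OF t], of H2] DERIV_chain2[OF dy[OF ggG[OF t]] ggd[OF t]]]
      Hc2 unfolding gg_def by blast
  have fh1: "ev2 (dX F) (ev2 H1 a b) (ev2 H2 a b) * ev2 (dX H1) a b + ev2 (dY F) (ev2 H1 a b) (ev2 H2 a b) * ev2 (dX H2) a b
        = l * ev2 (dX F) a b" for a b
  proof -
    have "((\<lambda>s. ev2 F (ev2 H1 s b) (ev2 H2 s b)) has_field_derivative l * ev2 (dX F) a b) (at a)"
      using DERIV_cmult[OF dX_deriv[of F b a], of l] l(2) by simp
    thus ?thesis using DERIV_unique ev2_chain[OF dX_deriv[of H1 b a] dX_deriv[of H2 b a], of F] by auto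
  qed
  have fh2: "ev2 (dX F) (ev2 H1 a b) (ev2 H2 a b) * ev2 (dY H1) a b + ev2 (dY F) (ev2 H1 a b) (ev2 H2 a b) * ev2 (dY H2) a b
        = l * ev2 (dY F) a b" for a b
  proof -
    have "((\<lambda>s. ev2 F (ev2 H1 a s) (ev2 H2 a s)) has_field_derivative l * ev2 (dY F) a b) (at b)"
      using DERIV_cmult[OF dY_deriv[of F a b], of l] l(2) by simp
    thus ?thesis using DERIV_unique ev2_chain[OF dY_deriv[of H1 a b] dY_deriv[of H2 a b], of F] by auto
  qed
  define al where "al t = (if x' t \<noteq> 0 then fy t / x' t else - fx t / y' t)" for t
  have aleq: "fy t = al t * x' t \<and> fx t = - al t * y' t" if t: "t \<in> Gamma" for t
  proof (cases "x' t \<noteq> 0")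
    case True
    have h: "fx t * x' t = - (fy t * y' t)" using tang[OF t] by (simp add: eq_neg_iff_add_eq_0)
    have "fx t = - fy t * y' t / x' t" using h True by (simp add: field_simps)
    thus ?thesis using True unfolding al_def by simp
  next
    case False
    hence "y' t \<noteq> 0" using tnz[OF t] by blast
    thus ?thesis using False tang[OF t] unfolding al_def by simp
  qed
  have key: "l * gd t * al t = J * al (gg t)" if t: "t \<in> Gamma" for t
  proof (rule alg_key)
    let ?a = "x t" and ?b = "y t"
    have H: "ev2 H1 ?a ?b = x (gg t)" "ev2 H2 ?a ?b = y (gg t)" using Hc1[OF t] Hc2[OF t] unfolding gg_def by auto
    show "fx (gg t) * ev2 (dX H1) ?a ?b + fy (gg t) * ev2 (dX H2) ?a ?b = l * fx t"
      using fh1[of ?a ?b] H unfolding fx_def fy_def by simp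
    show "fx (gg t) * ev2 (dY H1) ?a ?b + fy (gg t) * ev2 (dY H2) ?a ?b = l * fy t"
      using fh2[of ?a ?b] H unfolding fx_def fy_def by simp
    show "ev2 (dX H1) ?a ?b * x' t + ev2 (dY H1) ?a ?b * y' t = x' (gg t) * gd t" by (rule hc1[OF t])
    show "ev2 (dX H2) ?a ?b * x' t + ev2 (dY H2) ?a ?b * y' t = y' (gg t) * gd t" by (rule hc2[OF t])
    show "fy t = al t * x' t" "fx t = - al t * y' t" using aleq[OF t] by auto
    show "fy (gg t) = al (gg t) * x' (gg t)" "fx (gg t) = - al (gg t) * y' (gg t)" using aleq[OF ggG[OF t]] by auto
    show "J = ev2 (dX H1) ?a ?b * ev2 (dY H2) ?a ?b - ev2 (dY H1) ?a ?b * ev2 (dX H2) ?a ?b" using J(2) by simp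
    show "x' t \<noteq> 0 \<or> y' t \<noteq> 0" by (rule tnz[OF t])
  qed
  have Rfx: "R fx" unfolding fx_def by (rule reg_ev2[OF Rx Ry])
  have Rfy: "R fy" unfolding fy_def by (rule reg_ev2[OF Rx Ry])
  have Rx': "R x'" and Ry': "R y'" using x' y' unfolding RD_def by auto
  obtain u1 u2 where u: "R u1" "R u2" "\<forall>t\<in>Gamma. u1 t * x' t + u2 t * y' t = 1"
    using reg_partition[OF Rx' Ry' tnz] by blast
  have "R (\<lambda>t. u1 t * fy t - u2 t * fx t)" by (intro reg_diff reg_mult u Rfx Rfy)
  moreover have "\<And>t. t \<in> Gamma \<Longrightarrow> u1 t * fy t - u2 t * fx t = al t"
  proof -
    fix t assume t: "t \<in> Gamma"
    have "u1 t * fy t - u2 t * fx t = al t * (u1 t * x' t + u2 t * y' t)" using aleq[OF t] by (simp add: algebra_simps)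
    thus "u1 t * fy t - u2 t * fx t = al t" using u(3) t by simp
  qed
  ultimately have Ral: "R al" by (rule reg_cong)
  have fnz: "fy t \<noteq> 0 \<or> fx t \<noteq> 0" if t: "t \<in> Gamma" for t
    using smooth[OF F(2,3) t] unfolding fx_def fy_def by blast
  obtain v1 v2 where v: "R v1" "R v2" "\<forall>t\<in>Gamma. v1 t * fy t + v2 t * fx t = 1"
    using reg_partition[OF Rfy Rfx fnz] by blast
  have Rbe: "R (\<lambda>t. v1 t * x' t - v2 t * y' t)" by (intro reg_diff reg_mult v Rx' Ry')
  have "\<And>t. t \<in> Gamma \<Longrightarrow> al t * (v1 t * x' t - v2 t * y' t) = 1"
  proof -
    fix t assume t: "t \<in> Gamma"
    have "al t * (v1 t * x' t - v2 t * y' t) = v1 t * fy t + v2 t * fx t" using aleq[OF t] by (simp add: algebra_simps)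
    thus "al t * (v1 t * x' t - v2 t * y' t) = 1" using v(3) t by simp
  qed
  from reg_unit_form[OF Ral Rbe this] obtain c i j a b where
    cf: "c \<noteq> 0" "\<forall>t\<in>Gamma. al t = c * t ^ i * (t - 1) ^ j / (t ^ a * (t - 1) ^ b)" by blast
  have G1: "(2::complex) \<in> Gamma" "(-1::complex) \<in> Gamma" "(1/2::complex) \<in> Gamma" by (auto simp: Gamma_iff)
  have k1: "l * gd 2 * al 2 = J * al (gg 2)" using key[OF G1(1)] .
  have k2: "l * gd (-1) * al (-1) = J * al (gg (-1))" using key[OF G1(2)] .
  have gv: "gg 2 = -1" "gd 2 = 1" "gg (-1) = 1/2" "gd (-1) = 1/4" unfolding gg_def gd_def by (simp_all add: power2_eq_square)
  have a2: "al 2 = c * 2 ^ i / 2 ^ a" using cf(2) G1 by simp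
  have am1: "al (-1) = c * (-1) ^ i * (-2) ^ j / ((-1) ^ a * (-2) ^ b)" using cf(2) G1 by simp
  have ah: "al (1/2) = c * (1/2) ^ i * (-1/2) ^ j / ((1/2) ^ a * (-1/2) ^ b)" using cf(2) G1 by simp
  have n1: "norm l * (norm c * 2^i / 2^a) = norm J * (norm c * 2^j / 2^b)"
    using arg_cong[OF k1, of norm] unfolding gv a2 am1 by (simp add: norm_mult norm_divide norm_power)
  have n2: "norm l / 4 * (norm c * 2^j / 2^b) = norm J * (norm c * (1/2)^i * (1/2)^j / ((1/2)^a * (1/2)^b))"
    using arg_cong[OF k2, of norm] unfolding gv am1 ah by (simp add: norm_mult norm_divide norm_power)
  show False using real_contra[OF _ _ _ n1 n2] l(1) J(1) cf(1) by simp
qed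

end

lemma poly2_rep: assumes "poly2 f" shows "\<exists>F. \<forall>z. f z = ev2 F (fst z) (snd z)"
proof -
  obtain F where "\<forall>a b. f (a, b) = ev2 F a b" using poly2_ev2[OF assms] by blast
  hence "\<forall>z. f z = ev2 F (fst z) (snd z)" by (metis prod.collapse)
  thus ?thesis by blast
qed

theorem mainTheorem4:
  assumes "closed_embedding_Gamma_A2 \<tau>"
  shows "\<exists>g\<in>Aut_Gamma. \<not> (\<exists>h\<in>Aut_A2. \<forall>t\<in>Gamma. h (\<tau> t) = \<tau> (g t))"
proof
  have m1: "morphism_Gamma (\<lambda>t. 1 / (1 - t))" unfolding morphism_Gamma_def
  proof
    show "(\<lambda>t. 1 / (1 - t)) ` Gamma \<subseteq> Gamma" using g_Gamma by blast
    show "R (\<lambda>t. 1 / (1 - t))" by (rule regI[of _ "[:-1:]" 0 1]) (auto simp: Gamma_iff field_simps)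
  qed
  have m2: "morphism_Gamma (\<lambda>t. 1 - 1 / t)" unfolding morphism_Gamma_def
  proof
    show "(\<lambda>t. 1 - 1 / t) ` Gamma \<subseteq> Gamma" using gi_Gamma by blast
    show "R (\<lambda>t. 1 - 1 / t)" by (rule regI[of _ "[:-1,1:]" 1 0]) (auto simp: Gamma_iff field_simps)
  qed
  have inv: "\<forall>t\<in>Gamma. (\<lambda>t. 1 - 1 / t) ((\<lambda>t. 1 / (1 - t)) t) = t \<and> (\<lambda>t. 1 / (1 - t)) ((\<lambda>t. 1 - 1 / t) t) = t"
    using g_gi by auto
  show "(\<lambda>t. 1 / (1 - t)) \<in> Aut_Gamma" unfolding Aut_Gamma_def using m1 m2 inv by blast
next
  show "\<not> (\<exists>h\<in>Aut_A2. \<forall>t\<in>Gamma. h (\<tau> t) = \<tau> (1 / (1 - t)))"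
  proof
    assume "\<exists>h\<in>Aut_A2. \<forall>t\<in>Gamma. h (\<tau> t) = \<tau> (1 / (1 - t))"
    then obtain h h' where h: "poly_map_A2 h" "poly_map_A2 h'" "\<forall>z. h' (h z) = z \<and> h (h' z) = z"
      "\<forall>t\<in>Gamma. h (\<tau> t) = \<tau> (1 / (1 - t))" unfolding Aut_A2_def by blast
    obtain P Q Rf where PQR: "poly2 P" "poly2 Q" "poly2 Rf"
      "\<forall>t\<in>Gamma. P (\<tau> t) = t \<and> Q (\<tau> t) = 1 / t \<and> Rf (\<tau> t) = 1 / (t - 1)"
      and Rx: "R (\<lambda>t. fst (\<tau> t))" and Ry: "R (\<lambda>t. snd (\<tau> t))"
      using assms unfolding closed_embedding_Gamma_A2_def morphism_Gamma_A2_def by blast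
    obtain PP where PP: "\<forall>z. P z = ev2 PP (fst z) (snd z)" using poly2_rep[OF PQR(1)] by blast
    obtain QQ where QQ: "\<forall>z. Q z = ev2 QQ (fst z) (snd z)" using poly2_rep[OF PQR(2)] by blast
    obtain RR where RR: "\<forall>z. Rf z = ev2 RR (fst z) (snd z)" using poly2_rep[OF PQR(3)] by blast
    obtain H1 where H1: "\<forall>z. fst (h z) = ev2 H1 (fst z) (snd z)"
      using poly2_rep h(1) unfolding poly_map_A2_def by blast
    obtain H2 where H2: "\<forall>z. snd (h z) = ev2 H2 (fst z) (snd z)"
      using poly2_rep h(1) unfolding poly_map_A2_def by blast
    obtain K1 where K1: "\<forall>z. fst (h' z) = ev2 K1 (fst z) (snd z)"
      using poly2_rep h(2) unfolding poly_map_A2_def by blast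
    obtain K2 where K2: "\<forall>z. snd (h' z) = ev2 K2 (fst z) (snd z)"
      using poly2_rep h(2) unfolding poly_map_A2_def by blast
    have hr: "\<And>z. h z = (ev2 H1 (fst z) (snd z), ev2 H2 (fst z) (snd z))" using H1 H2 by (metis prod.collapse)
    have hr': "\<And>z. h' z = (ev2 K1 (fst z) (snd z), ev2 K2 (fst z) (snd z))" using K1 K2 by (metis prod.collapse)
    interpret setting "\<lambda>t. fst (\<tau> t)" "\<lambda>t. snd (\<tau> t)" PP QQ RR H1 H2 K1 K2
    proof
      show "R (\<lambda>t. fst (\<tau> t))" by (rule Rx)
      show "R (\<lambda>t. snd (\<tau> t))" by (rule Ry)
      fix t assume t: "t \<in> Gamma"
      show "ev2 PP (fst (\<tau> t)) (snd (\<tau> t)) = t" using PP PQR(4) t by metis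
      show "ev2 QQ (fst (\<tau> t)) (snd (\<tau> t)) = 1 / t" using QQ PQR(4) t by metis
      show "ev2 RR (fst (\<tau> t)) (snd (\<tau> t)) = 1 / (t - 1)" using RR PQR(4) t by metis
      show "ev2 H1 (fst (\<tau> t)) (snd (\<tau> t)) = fst (\<tau> (1 / (1 - t)))" using H1 h(4) t by metis
      show "ev2 H2 (fst (\<tau> t)) (snd (\<tau> t)) = snd (\<tau> (1 / (1 - t)))" using H2 h(4) t by metis
    next
      fix a b
      have e1: "h' (h (a, b)) = (a, b)" using h(3) by blast
      have e2: "h (h' (a, b)) = (a, b)" using h(3) by blast
      show "ev2 K1 (ev2 H1 a b) (ev2 H2 a b) = a" using e1 unfolding hr hr' by simp
      show "ev2 K2 (ev2 H1 a b) (ev2 H2 a b) = b" using e1 unfolding hr hr' by simp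
      show "ev2 H1 (ev2 K1 a b) (ev2 K2 a b) = a" using e2 unfolding hr hr' by simp
      show "ev2 H2 (ev2 K1 a b) (ev2 K2 a b) = b" using e2 unfolding hr hr' by simp
    qed
    show False by (rule final)
  qed
qed

end
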